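(* Let $q=p^k$ with $p$ prime, and let $s\ge1$ be an integer. Then the Hamming space $Q_{q^2s}^n$ contains at least $q^{\binom{n}{2}(1+o(1))}$ mutually nonequivalent topolinear MDS codes, as $n\to\infty$.
   Context: $Q_Q$ denotes an alphabet of size $Q$ and $Q_Q^n$ the Hamming space of $n$-tuples. An MDS code (code distance 2) of length $n$ is a set $M\subseteq Q_Q^n$ with $|M|=Q^{n-1}$ and any two distinct elements at Hamming distance at least $2$. Two sets are equivalent if one is mapped to the other by an isometry of the Hamming space (a composition of a coordinate permutation and an isotopism $\overline{x}\mapsto(\tau_1x_1,\dots,\tau_nx_n)$, $\tau_i$ permutations of the alphabet). $M$ is topolinear if the group of isotopisms mapping $M$ onto $M$ contains a subgroup of cardinality $|M|$ acting transitively on $M$. *)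

theory Defs
  imports Complex_Main "HOL-Library.FuncSet" "HOL-Combinatorics.Permutations"
    "HOL-Computational_Algebra.Primes"
begin

definition hamming_space :: "nat \<Rightarrow> nat \<Rightarrow> (nat \<Rightarrow> nat) set" where
  "hamming_space Q n = PiE {..<n} (\<lambda>_. {..<Q})"

definition hdist :: "nat \<Rightarrow> (nat \<Rightarrow> nat) \<Rightarrow> (nat \<Rightarrow> nat) \<Rightarrow> nat" where
  "hdist n x y = card {i \<in> {..<n}. x i \<noteq> y i}"

definition mds2 :: "nat \<Rightarrow> nat \<Rightarrow> (nat \<Rightarrow> nat) set \<Rightarrow> bool" where
  "mds2 Q n M \<longleftrightarrow> M \<subseteq> hamming_space Q n \<and> card M = Q ^ (n - 1) \<and>
     (\<forall>x\<in>M. \<forall>y\<in>M. x \<noteq> y \<longrightarrow> hdist n x y \<ge> 2)"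

definition isotopisms :: "nat \<Rightarrow> nat \<Rightarrow> (nat \<Rightarrow> nat \<Rightarrow> nat) set" where
  "isotopisms Q n = PiE {..<n} (\<lambda>_. {f. f permutes {..<Q}})"

definition iso_apply :: "nat \<Rightarrow> (nat \<Rightarrow> nat \<Rightarrow> nat) \<Rightarrow> (nat \<Rightarrow> nat) \<Rightarrow> (nat \<Rightarrow> nat)" where
  "iso_apply n \<tau> x = restrict (\<lambda>i. \<tau> i (x i)) {..<n}"

definition iso_comp :: "nat \<Rightarrow> (nat \<Rightarrow> nat \<Rightarrow> nat) \<Rightarrow> (nat \<Rightarrow> nat \<Rightarrow> nat) \<Rightarrow> (nat \<Rightarrow> nat \<Rightarrow> nat)" where
  "iso_comp n a b = restrict (\<lambda>i. a i \<circ> b i) {..<n}"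

definition iso_id :: "nat \<Rightarrow> (nat \<Rightarrow> nat \<Rightarrow> nat)" where
  "iso_id n = restrict (\<lambda>i. id) {..<n}"

definition iso_inv :: "nat \<Rightarrow> (nat \<Rightarrow> nat \<Rightarrow> nat) \<Rightarrow> (nat \<Rightarrow> nat \<Rightarrow> nat)" where
  "iso_inv n a = restrict (\<lambda>i. inv (a i)) {..<n}"

definition perm_apply :: "nat \<Rightarrow> (nat \<Rightarrow> nat) \<Rightarrow> (nat \<Rightarrow> nat) \<Rightarrow> (nat \<Rightarrow> nat)" where
  "perm_apply n \<sigma> x = restrict (\<lambda>i. x (\<sigma> i)) {..<n}"

text \<open>Equivalence: image under an isometry of the Hamming space
  (coordinate permutation composed with an isotopism).\<close>
definition equivalent :: "nat \<Rightarrow> nat \<Rightarrow> (nat \<Rightarrow> nat) set \<Rightarrow> (nat \<Rightarrow> nat) set \<Rightarrow> bool" where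
  "equivalent Q n M M' \<longleftrightarrow> (\<exists>\<sigma> \<tau>. \<sigma> permutes {..<n} \<and> \<tau> \<in> isotopisms Q n \<and>
      M' = (\<lambda>x. iso_apply n \<tau> (perm_apply n \<sigma> x)) ` M)"

definition topolinear :: "nat \<Rightarrow> nat \<Rightarrow> (nat \<Rightarrow> nat) set \<Rightarrow> bool" where
  "topolinear Q n M \<longleftrightarrow> (\<exists>H. H \<subseteq> isotopisms Q n \<and>
      (\<forall>\<tau>\<in>H. iso_apply n \<tau> ` M = M) \<and>
      iso_id n \<in> H \<and>
      (\<forall>a\<in>H. \<forall>b\<in>H. iso_comp n a b \<in> H) \<and>
      (\<forall>a\<in>H. iso_inv n a \<in> H) \<and>
      card H = card M \<and>
      (\<forall>x\<in>M. \<forall>y\<in>M. \<exists>\<tau>\<in>H. iso_apply n \<tau> x = y))"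

end

theory Submission imports Defs "HOL-Real_Asymp.Real_Asymp" begin

lemma swap_tri: "(\<Sum>j<N. \<Sum>i<j. g i j) = (\<Sum>i<N. \<Sum>j\<in>{Suc i..<N}. g i j::int)"
proof (induction N)
  case 0 then show ?case by simp
next
  case (Suc N)
  have "(\<Sum>i<Suc N. \<Sum>j\<in>{Suc i..<Suc N}. g i j) = (\<Sum>i<N. \<Sum>j\<in>{Suc i..<Suc N}. g i j)"
    by simp
  also have "\<dots> = (\<Sum>i<N. (\<Sum>j\<in>{Suc i..<N}. g i j) + g i N)"
    by (rule sum.cong) auto
  finally show ?case using Suc by (simp add: sum.distrib)
qed

definition gam :: "nat \<Rightarrow> (nat \<times> nat \<Rightarrow> nat) \<Rightarrow> (nat \<Rightarrow> int) \<Rightarrow> nat \<Rightarrow> int" where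
  "gam N lam ac i = (if i < N then (\<Sum>j\<in>{Suc i..<N}. int (lam (j,i)) * ac j) + (\<Sum>j<i. int (lam (i,j)) * ac j) else 0)"

definition Phi :: "nat \<Rightarrow> (nat \<times> nat \<Rightarrow> nat) \<Rightarrow> (nat \<Rightarrow> int) \<Rightarrow> int" where
  "Phi N lam u = (\<Sum>j<N. \<Sum>i<j. int (lam (j,i)) * u i * u j)"

lemma Phi_add: "Phi N lam (\<lambda>i. u i + v i) = Phi N lam u + Phi N lam v + (\<Sum>i<Suc N. gam N lam v i * u i)"
proof -
  have e: "\<And>i j. int (lam (j,i)) * (u i + v i) * (u j + v j) = int (lam (j,i)) * u i * u j + int (lam (j,i)) * v i * v j
     + (int (lam (j,i)) * v j * u i + int (lam (j,i)) * v i * u j)"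
    by (simp add: algebra_simps)
  have "Phi N lam (\<lambda>i. u i + v i) = Phi N lam u + Phi N lam v
     + ((\<Sum>j<N. \<Sum>i<j. int (lam (j,i)) * v j * u i) + (\<Sum>j<N. \<Sum>i<j. int (lam (j,i)) * v i * u j))"
    unfolding Phi_def e by (simp add: sum.distrib)
  also have "(\<Sum>j<N. \<Sum>i<j. int (lam (j,i)) * v j * u i) = (\<Sum>i<N. \<Sum>j\<in>{Suc i..<N}. int (lam (j,i)) * v j * u i)"
    by (rule swap_tri)
  also have "(\<Sum>i<N. \<Sum>j\<in>{Suc i..<N}. int (lam (j,i)) * v j * u i) + (\<Sum>i<N. \<Sum>j<i. int (lam (i,j)) * v j * u i)
     = (\<Sum>i<N. gam N lam v i * u i)"
    by (simp add: gam_def sum.distrib[symmetric] sum_distrib_left distrib_left mult.commute mult.left_commute)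
  also have "\<dots> = (\<Sum>i<Suc N. gam N lam v i * u i)"
    by (simp add: gam_def)
  finally show ?thesis .
qed

lemma gam_add: "gam N lam (\<lambda>j. u j + v j) i = gam N lam u i + gam N lam v i"
  by (simp add: gam_def sum.distrib algebra_simps)

lemma gam_cong: assumes "\<And>j. j < N \<Longrightarrow> (q::int) dvd (u j - v j)"
  shows "q dvd (gam N lam u i - gam N lam v i)"
proof -
  have "gam N lam u i - gam N lam v i = (if i < N then (\<Sum>j\<in>{Suc i..<N}. int (lam (j,i)) * (u j - v j)) + (\<Sum>j<i. int (lam (i,j)) * (u j - v j)) else 0)"
    by (simp add: gam_def sum_subtractf algebra_simps)
  then show ?thesis using assms by (auto intro!: dvd_add dvd_sum dvd_mult)
qed

lemma Phi_cong: assumes "\<And>j. j < N \<Longrightarrow> (q::int) dvd (u j - v j)"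
  shows "q dvd (Phi N lam u - Phi N lam v)"
proof -
  have e: "\<And>i j. int (lam (j,i)) * u i * u j - int (lam (j,i)) * v i * v j =
     int (lam (j,i)) * u i * (u j - v j) + int (lam (j,i)) * v j * (u i - v i)"
    by (simp add: algebra_simps)
  have "Phi N lam u - Phi N lam v = (\<Sum>j<N. \<Sum>i<j. int (lam (j,i)) * u i * (u j - v j) + int (lam (j,i)) * v j * (u i - v i))"
    unfolding Phi_def by (simp add: sum_subtractf e[symmetric])
  then show ?thesis using assms by (auto intro!: dvd_add dvd_sum dvd_mult)
qed


definition code :: "nat \<Rightarrow> nat \<Rightarrow> nat \<Rightarrow> (nat \<times> nat \<Rightarrow> nat) \<Rightarrow> (nat \<Rightarrow> nat) set" where
  "code q m N lam = {x \<in> hamming_space (q*m) (Suc N). int m dvd (\<Sum>i<Suc N. int (x i mod m)) \<and>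
     int q dvd ((\<Sum>i<Suc N. int (x i div m)) - Phi N lam (\<lambda>i. int (x i mod m)))}"

definition tr :: "nat \<Rightarrow> nat \<Rightarrow> nat \<Rightarrow> (nat \<times> nat \<Rightarrow> nat) \<Rightarrow> (nat \<Rightarrow> nat) \<Rightarrow> nat \<Rightarrow> nat \<Rightarrow> nat" where
  "tr q m N lam c i y = (if y < q*m then ((y mod m + c i mod m) mod m) +
      m * nat ((int (y div m) + int (c i div m) + gam N lam (\<lambda>j. int (c j mod m)) i * int (y mod m)) mod int q) else y)"

definition act :: "nat \<Rightarrow> nat \<Rightarrow> nat \<Rightarrow> (nat \<times> nat \<Rightarrow> nat) \<Rightarrow> (nat \<Rightarrow> nat) \<Rightarrow> (nat \<Rightarrow> nat) \<Rightarrow> (nat \<Rightarrow> nat)" where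
  "act q m N lam c x = restrict (\<lambda>i. tr q m N lam c i (x i)) {..<Suc N}"

definition Tm :: "nat \<Rightarrow> nat \<Rightarrow> nat \<Rightarrow> (nat \<times> nat \<Rightarrow> nat) \<Rightarrow> (nat \<Rightarrow> nat) \<Rightarrow> (nat \<Rightarrow> nat \<Rightarrow> nat)" where
  "Tm q m N lam c = restrict (\<lambda>i. tr q m N lam c i) {..<Suc N}"

lemma dvd_diff_mod: "(m::int) dvd (x mod m - x)"
  by (metis mod_eq_dvd_iff mod_mod_trivial)

lemma dvd_small_eq: assumes "(m::int) dvd (a - b)" "0 \<le> a" "a < m" "0 \<le> b" "b < m" shows "a = b"
  using assms by (metis mod_eq_dvd_iff mod_pos_pos_trivial)

locale cd =
  fixes q m N :: nat and lam :: "nat \<times> nat \<Rightarrow> nat"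
  assumes q1: "1 < q" and qm: "q dvd m" and m0: "0 < m"
begin

abbreviation "QQ \<equiv> q * m"
abbreviation "C \<equiv> code q m N lam"
abbreviation "T \<equiv> tr q m N lam"
abbreviation "ac \<equiv> act q m N lam"

lemma q0: "0 < q" using q1 by simp

lemma enc_mod: "a < m \<Longrightarrow> (a + m*b) mod m = a" by simp
lemma enc_div: "a < m \<Longrightarrow> (a + m*b) div m = b" by simp
lemma enc_lt: assumes "a < m" "b < q" shows "a + m*b < q*m"
proof -
  have "a + m*b < m + m*b" using assms by simp
  also have "\<dots> = m * Suc b" by simp
  also have "\<dots> \<le> m * q" using assms by (intro mult_le_mono2) simp
  finally show ?thesis by (simp add: mult.commute)
qed
lemma div_lt: "y < q*m \<Longrightarrow> y div m < q"
  by (simp add: less_mult_imp_div_less)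

lemma y_eq: assumes "y1 mod m = y2 mod m" "y1 div m = y2 div m" shows "y1 = y2"
  using assms by (metis div_mult_mod_eq)

lemma tr_out: "\<not> y < QQ \<Longrightarrow> T c i y = y" by (simp add: tr_def)

lemma natmod_lt: "nat (z mod int q) < q" using q0 by (simp add: nat_less_iff)

lemma tr_lt: "y < QQ \<Longrightarrow> T c i y < QQ"
  unfolding tr_def using natmod_lt m0 by (auto intro!: enc_lt)

lemma tr_A: "y < QQ \<Longrightarrow> int (T c i y mod m) = (int (y mod m) + int (c i mod m)) mod int m"
  unfolding tr_def using m0 by (simp add: zmod_int)

lemma tr_B: "y < QQ \<Longrightarrow> int (T c i y div m) = (int (y div m) + int (c i div m) + gam N lam (\<lambda>j. int (c j mod m)) i * int (y mod m)) mod int q"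
  unfolding tr_def using m0 q0 by simp


lemma hs_iff: "x \<in> hamming_space QQ (Suc N) \<longleftrightarrow> (\<forall>i<Suc N. x i < QQ) \<and> (\<forall>i. i \<ge> Suc N \<longrightarrow> x i = undefined)"
  unfolding hamming_space_def PiE_def Pi_def extensional_def by auto

lemma act_hs: "x \<in> hamming_space QQ (Suc N) \<Longrightarrow> ac c x \<in> hamming_space QQ (Suc N)"
  unfolding hs_iff act_def using tr_lt by auto

lemma qdvd: "int q dvd int m" using qm by simp

lemma act_mem: assumes c: "c \<in> C" and x: "x \<in> C" shows "ac c x \<in> C"
proof -
  define n where "n = Suc N"
  have xh: "x \<in> hamming_space QQ n" and ch: "c \<in> hamming_space QQ n" using c x by (auto simp: code_def n_def)
  have xl: "\<And>i. i < n \<Longrightarrow> x i < QQ" using xh by (simp add: hs_iff n_def)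
  define a where "a = (\<lambda>i. int (x i mod m))"
  define b where "b = (\<lambda>i. int (x i div m))"
  define a2 where "a2 = (\<lambda>i. int (c i mod m))"
  define b2 where "b2 = (\<lambda>i. int (c i div m))"
  define g where "g = gam N lam a2"
  define y where "y = ac c x"
  have ya: "\<And>i. i < n \<Longrightarrow> int (y i mod m) = (a i + a2 i) mod int m"
    using xl tr_A by (simp add: y_def act_def a_def a2_def n_def)
  have yb: "\<And>i. i < n \<Longrightarrow> int (y i div m) = (b i + b2 i + g i * a i) mod int q"
    using xl tr_B by (simp add: y_def act_def a_def b_def b2_def g_def a2_def n_def)
  have x1: "int m dvd sum a {..<n}" "int q dvd (sum b {..<n} - Phi N lam a)"
    using x by (auto simp: code_def a_def b_def n_def)
  have c1: "int m dvd sum a2 {..<n}" "int q dvd (sum b2 {..<n} - Phi N lam a2)"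
    using c by (auto simp: code_def a2_def b2_def n_def)
  have "int m dvd ((\<Sum>i<n. int (y i mod m)) - sum a {..<n} - sum a2 {..<n})"
  proof -
    have "(\<Sum>i<n. int (y i mod m)) - sum a {..<n} - sum a2 {..<n} = (\<Sum>i<n. int (y i mod m) - a i - a2 i)"
      by (simp add: sum_subtractf)
    also have "\<dots> = (\<Sum>i<n. (a i + a2 i) mod int m - (a i + a2 i))"
      by (rule sum.cong) (auto simp: ya)
    finally show ?thesis by (simp add: dvd_sum dvd_diff_mod)
  qed
  then have A1: "int m dvd (\<Sum>i<n. int (y i mod m))"
  proof -
    assume h: "int m dvd ((\<Sum>i<n. int (y i mod m)) - sum a {..<n} - sum a2 {..<n})"
    have "(\<Sum>i<n. int (y i mod m)) = ((\<Sum>i<n. int (y i mod m)) - sum a {..<n} - sum a2 {..<n}) + sum a {..<n} + sum a2 {..<n}" by linarith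
    moreover have "int m dvd ((\<Sum>i<n. int (y i mod m)) - sum a {..<n} - sum a2 {..<n}) + sum a {..<n} + sum a2 {..<n}"
      by (intro dvd_add h x1(1) c1(1))
    ultimately show ?thesis by simp
  qed
  define a3 where "a3 = (\<lambda>i. int (y i mod m))"
  have "int q dvd (Phi N lam a3 - Phi N lam (\<lambda>i. a i + a2 i))"
  proof (rule Phi_cong)
    fix j assume "j < N"
    then have "int m dvd (a3 j - (a j + a2 j))" by (simp add: a3_def ya n_def dvd_diff_mod)
    then show "int q dvd (a3 j - (a j + a2 j))" using qdvd dvd_trans by blast
  qed
  then have P: "int q dvd (Phi N lam a3 - (Phi N lam a + Phi N lam a2 + (\<Sum>i<n. g i * a i)))"
    by (simp add: Phi_add g_def n_def)
  have "int q dvd ((\<Sum>i<n. int (y i div m)) - sum b {..<n} - sum b2 {..<n} - (\<Sum>i<n. g i * a i))"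
  proof -
    have "(\<Sum>i<n. int (y i div m)) - sum b {..<n} - sum b2 {..<n} - (\<Sum>i<n. g i * a i) = (\<Sum>i<n. int (y i div m) - (b i + b2 i + g i * a i))"
      by (simp add: sum_subtractf sum.distrib)
    also have "\<dots> = (\<Sum>i<n. (b i + b2 i + g i * a i) mod int q - (b i + b2 i + g i * a i))"
      by (rule sum.cong) (auto simp: yb)
    finally show ?thesis by (simp add: dvd_sum dvd_diff_mod)
  qed
  then have B1: "int q dvd ((\<Sum>i<n. int (y i div m)) - Phi N lam a3)"
  proof -
    assume h: "int q dvd ((\<Sum>i<n. int (y i div m)) - sum b {..<n} - sum b2 {..<n} - (\<Sum>i<n. g i * a i))"
    have "(\<Sum>i<n. int (y i div m)) - Phi N lam a3 = ((\<Sum>i<n. int (y i div m)) - sum b {..<n} - sum b2 {..<n} - (\<Sum>i<n. g i * a i))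
       + (sum b {..<n} - Phi N lam a) + (sum b2 {..<n} - Phi N lam a2) - (Phi N lam a3 - (Phi N lam a + Phi N lam a2 + (\<Sum>i<n. g i * a i)))"
      by linarith
    moreover have "int q dvd ((\<Sum>i<n. int (y i div m)) - sum b {..<n} - sum b2 {..<n} - (\<Sum>i<n. g i * a i))
       + (sum b {..<n} - Phi N lam a) + (sum b2 {..<n} - Phi N lam a2) - (Phi N lam a3 - (Phi N lam a + Phi N lam a2 + (\<Sum>i<n. g i * a i)))"
      by (intro dvd_add dvd_diff h x1(2) c1(2) P)
    ultimately show ?thesis by simp
  qed
  show ?thesis
    using A1 B1 act_hs[OF xh[unfolded n_def]] unfolding code_def y_def a3_def n_def by simp
qed


lemma tr_inj: "inj_on (T c i) {..<QQ}"
proof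
  fix y1 y2 assume y1: "y1 \<in> {..<QQ}" and y2: "y2 \<in> {..<QQ}" and e: "T c i y1 = T c i y2"
  have y1': "y1 < QQ" and y2': "y2 < QQ" using y1 y2 by auto
  have "(int (y1 mod m) + int (c i mod m)) mod int m = int (T c i y1 mod m)" using tr_A[OF y1'] by simp
  also have "\<dots> = int (T c i y2 mod m)" using e by simp
  also have "\<dots> = (int (y2 mod m) + int (c i mod m)) mod int m" using tr_A[OF y2'] by simp
  finally have "(int (y1 mod m) + int (c i mod m)) mod int m = (int (y2 mod m) + int (c i mod m)) mod int m" .
  then have "int m dvd ((int (y1 mod m) + int (c i mod m)) - (int (y2 mod m) + int (c i mod m)))"
    unfolding mod_eq_dvd_iff .
  then have "int m dvd (int (y1 mod m) - int (y2 mod m))" by simp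
  then have a: "int (y1 mod m) = int (y2 mod m)"
    by (rule dvd_small_eq) (use m0 in auto)
  have "(int (y1 div m) + int (c i div m) + gam N lam (\<lambda>j. int (c j mod m)) i * int (y1 mod m)) mod int q = int (T c i y1 div m)"
    using tr_B[OF y1'] by simp
  also have "\<dots> = int (T c i y2 div m)" using e by simp
  also have "\<dots> = (int (y2 div m) + int (c i div m) + gam N lam (\<lambda>j. int (c j mod m)) i * int (y2 mod m)) mod int q"
    using tr_B[OF y2'] by simp
  finally have "(int (y1 div m) + int (c i div m) + gam N lam (\<lambda>j. int (c j mod m)) i * int (y1 mod m)) mod int q
     = (int (y2 div m) + int (c i div m) + gam N lam (\<lambda>j. int (c j mod m)) i * int (y2 mod m)) mod int q" .
  then have "int q dvd ((int (y1 div m) + int (c i div m) + gam N lam (\<lambda>j. int (c j mod m)) i * int (y1 mod m))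
     - (int (y2 div m) + int (c i div m) + gam N lam (\<lambda>j. int (c j mod m)) i * int (y2 mod m)))"
    unfolding mod_eq_dvd_iff .
  then have "int q dvd (int (y1 div m) - int (y2 div m))" unfolding a by simp
  then have "int (y1 div m) = int (y2 div m)"
    by (rule dvd_small_eq) (use y1 y2 div_lt in auto)
  then show "y1 = y2" using a y_eq by simp
qed

lemma tr_perm: "T c i permutes {..<QQ}"
proof (rule bij_imp_permutes)
  have "T c i ` {..<QQ} \<subseteq> {..<QQ}" using tr_lt by auto
  then have "T c i ` {..<QQ} = {..<QQ}" using tr_inj by (intro endo_inj_surj) auto
  then show "bij_betw (T c i) {..<QQ} {..<QQ}" using tr_inj by (simp add: bij_betw_def)
qed (simp add: tr_out)

lemma nat_eq_md: "int (u mod m) = int (v mod m) \<Longrightarrow> int (u div m) = int (v div m) \<Longrightarrow> u = v"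
  using y_eq by simp

lemma tr_comp: assumes c: "c \<in> hamming_space QQ (Suc N)" and d: "d \<in> hamming_space QQ (Suc N)"
  and i: "i < Suc N"
  shows "T c i (T d i y) = T (ac c d) i y"
proof (cases "y < QQ")
  case False then show ?thesis by (simp add: tr_out)
next
  case True
  define e where "e = ac c d"
  have cl: "\<And>j. j < Suc N \<Longrightarrow> c j < QQ" and dl: "\<And>j. j < Suc N \<Longrightarrow> d j < QQ"
    using c d by (auto simp: hs_iff)
  have ei: "\<And>j. j < Suc N \<Longrightarrow> e j = T c j (d j)" by (simp add: e_def act_def)
  define a where "a = int (y mod m)"
  define b where "b = int (y div m)"
  define ad where "ad = (\<lambda>j. int (d j mod m))"
  define ac' where "ac' = (\<lambda>j. int (c j mod m))"
  define ae where "ae = (\<lambda>j. int (e j mod m))"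
  define bd where "bd = int (d i div m)"
  define bc where "bc = int (c i div m)"
  define be where "be = int (e i div m)"
  define gc where "gc = gam N lam ac' i"
  define gd where "gd = gam N lam ad i"
  define ge where "ge = gam N lam ae i"
  have aej: "\<And>j. j < Suc N \<Longrightarrow> ae j = (ad j + ac' j) mod int m"
    unfolding ae_def ad_def ac'_def using ei tr_A dl by simp
  have be: "be = (bd + bc + gc * ad i) mod int q"
    unfolding be_def bd_def bc_def gc_def ad_def ac'_def using ei[OF i] tr_B dl[OF i] by simp
  have y': "T d i y < QQ" using True tr_lt by simp
  have a': "int (T d i y mod m) = (a + ad i) mod int m"
    unfolding a_def ad_def using tr_A True by simp
  have b': "int (T d i y div m) = (b + bd + gd * a) mod int q"
    unfolding a_def b_def bd_def gd_def ad_def using tr_B True by simp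
  have mq: "\<And>z. int q dvd (z mod int m - z)" using qdvd dvd_diff_mod dvd_trans by blast
  have ge: "int q dvd (ge - (gd + gc))"
  proof -
    have "int q dvd (gam N lam ae i - gam N lam (\<lambda>j. ad j + ac' j) i)"
      by (rule gam_cong) (simp add: aej mq)
    then show ?thesis by (simp add: ge_def gd_def gc_def gam_add)
  qed
  have A: "int (T c i (T d i y) mod m) = int (T (ac c d) i y mod m)"
  proof -
    have "int (T c i (T d i y) mod m) = ((a + ad i) mod int m + ac' i) mod int m"
      using tr_A[OF y'] a' by (simp add: ac'_def)
    also have "\<dots> = (a + ae i) mod int m"
      using aej[OF i] by (simp add: mod_simps add.assoc)
    also have "\<dots> = int (T (ac c d) i y mod m)"
      using tr_A[OF True] by (simp add: a_def ae_def e_def)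
    finally show ?thesis .
  qed
  have B: "int (T c i (T d i y) div m) = int (T (ac c d) i y div m)"
  proof -
    have l: "int (T c i (T d i y) div m) = ((b + bd + gd * a) mod int q + bc + gc * ((a + ad i) mod int m)) mod int q"
      using tr_B[OF y'] a' b' by (simp add: ac'_def bc_def gc_def)
    have r: "int (T (ac c d) i y div m) = (b + be + ge * a) mod int q"
      using tr_B[OF True] by (simp add: a_def b_def be_def ge_def ae_def e_def)
    have "int q dvd (((b + bd + gd * a) mod int q + bc + gc * ((a + ad i) mod int m)) - (b + be + ge * a))"
    proof -
      have eq: "((b + bd + gd * a) mod int q + bc + gc * ((a + ad i) mod int m)) - (b + be + ge * a)
        = ((b + bd + gd * a) mod int q - (b + bd + gd * a)) + gc * ((a + ad i) mod int m - (a + ad i))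
          - (be - (bd + bc + gc * ad i)) - (ge - (gd + gc)) * a"
        by (simp add: algebra_simps)
      show ?thesis unfolding eq unfolding be by (intro dvd_add dvd_diff dvd_mult dvd_mult2 dvd_diff_mod mq ge)
    qed
    then show ?thesis unfolding l r by (simp add: mod_eq_dvd_iff)
  qed
  show ?thesis using A B by (rule nat_eq_md)
qed


abbreviation "HS \<equiv> hamming_space QQ (Suc N)"
definition "zv = restrict (\<lambda>_. 0::nat) {..<Suc N}"

lemma gam0: "gam N lam (\<lambda>j. 0) i = 0" by (simp add: gam_def)

lemma gam_eq: "(\<And>j. j < N \<Longrightarrow> u j = v j) \<Longrightarrow> gam N lam u i = gam N lam v i"
  unfolding gam_def by (auto intro!: sum.cong arg_cong2[where f="(+)"])

lemma Phi_eq: "(\<And>j. j < N \<Longrightarrow> u j = v j) \<Longrightarrow> Phi N lam u = Phi N lam v"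
  unfolding Phi_def by (auto intro!: sum.cong)

lemma act_apply: "i < Suc N \<Longrightarrow> ac c x i = T c i (x i)" by (simp add: act_def)

lemma gam_zv: "gam N lam (\<lambda>j. int (zv j mod m)) i = 0"
  using gam_eq[of "\<lambda>j. int (zv j mod m)" "\<lambda>j. 0"] gam0 by (simp add: zv_def)

lemma zv_hs: "zv \<in> HS" unfolding zv_def hs_iff using q1 m0 by simp

lemma zv_C: "zv \<in> C"
proof -
  have "Phi N lam (\<lambda>i. int (zv i mod m)) = Phi N lam (\<lambda>i. 0)" by (rule Phi_eq) (simp add: zv_def)
  moreover have "Phi N lam (\<lambda>i. 0) = 0" by (simp add: Phi_def)
  ultimately show ?thesis using zv_hs unfolding code_def by (simp add: zv_def)
qed

lemma tr_zv: "i < Suc N \<Longrightarrow> T zv i = id"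
proof
  fix y assume i: "i < Suc N"
  show "T zv i y = id y"
    using i div_lt[of y] gam_zv by (auto simp: tr_def zv_def nat_mod_as_int[symmetric] simp del: of_nat_mod)
qed

lemma act_zv: assumes c: "c \<in> HS" shows "ac c zv = c"
proof
  fix i show "ac c zv i = c i"
  proof (cases "i < Suc N")
    case True
    then have "c i < QQ" using c by (simp add: hs_iff)
    then show ?thesis using True m0 div_lt[of "c i"]
      by (simp add: act_def zv_def tr_def nat_mod_as_int[symmetric] del: of_nat_mod)
  next
    case False then show ?thesis using c by (simp add: act_def hs_iff)
  qed
qed

lemma act_comp: assumes "c \<in> HS" "d \<in> HS" "w \<in> HS" shows "ac c (ac d w) = ac (ac c d) w"
proof
  fix i show "ac c (ac d w) i = ac (ac c d) w i"
  proof (cases "i < Suc N")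
    case True
    then show ?thesis using tr_comp[OF assms(1,2) True] by (simp only: act_apply)
  next
    case False then show ?thesis by (simp add: act_def)
  qed
qed

lemma act_inj: assumes "x \<in> HS" "y \<in> HS" "ac c x = ac c y" shows "x = y"
proof
  fix i show "x i = y i"
  proof (cases "i < Suc N")
    case True
    have "ac c x i = ac c y i" using assms(3) by simp
    then have e: "T c i (x i) = T c i (y i)" by (simp only: act_apply[OF True])
    have "x i \<in> {..<QQ}" "y i \<in> {..<QQ}" using assms(1,2) True by (simp_all add: hs_iff)
    then show ?thesis using inj_onD[OF tr_inj e] by blast
  next
    case False then show ?thesis using assms by (simp add: hs_iff)
  qed
qed

lemma finite_HS: "finite HS" unfolding hamming_space_def by (simp add: finite_PiE)
lemma C_HS: "C \<subseteq> HS" unfolding code_def by auto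
lemma finite_C: "finite C" using finite_HS C_HS finite_subset by blast

lemma act_surj: assumes "c \<in> C" shows "ac c ` C = C"
proof (rule endo_inj_surj)
  show "finite C" by (rule finite_C)
  show "ac c ` C \<subseteq> C" using act_mem assms by auto
  show "inj_on (ac c) C"
  proof (rule inj_onI)
    fix x y assume "x \<in> C" "y \<in> C" "ac c x = ac c y"
    then show "x = y" using act_inj[of x y c] subsetD[OF C_HS] by blast
  qed
qed

lemma Tm_iso: "Tm q m N lam c \<in> isotopisms QQ (Suc N)"
  unfolding isotopisms_def Tm_def using tr_perm by auto

lemma Tm_at: "i < Suc N \<Longrightarrow> Tm q m N lam c i = T c i" by (simp add: Tm_def)
lemma iso_inv_at: "i < n \<Longrightarrow> iso_inv n a i = inv (a i)" by (simp add: iso_inv_def)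

lemma Tm_apply: "iso_apply (Suc N) (Tm q m N lam c) x = ac c x"
  unfolding iso_apply_def Tm_def act_def by auto

lemma Tm_comp: assumes "c \<in> HS" "d \<in> HS"
  shows "iso_comp (Suc N) (Tm q m N lam c) (Tm q m N lam d) = Tm q m N lam (ac c d)"
  unfolding iso_comp_def Tm_def using tr_comp[OF assms] by (auto simp: restrict_def fun_eq_iff)

lemma Tm_zv: "Tm q m N lam zv = iso_id (Suc N)"
  unfolding Tm_def iso_id_def using tr_zv by (auto simp: restrict_def fun_eq_iff)

lemma inv_ex: assumes c: "c \<in> C" obtains c' where "c' \<in> C" "ac c c' = zv"
  using act_surj[OF c] zv_C by (metis imageE)

lemma Tm_inv: assumes c: "c \<in> C" and c': "c' \<in> C" and e: "ac c c' = zv"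
  shows "iso_inv (Suc N) (Tm q m N lam c) = Tm q m N lam c'"
proof -
  have "\<And>i y. i < Suc N \<Longrightarrow> inv (T c i) y = T c' i y"
  proof -
    fix i y assume i: "i < Suc N"
    have "T c i (T c' i y) = T (ac c c') i y"
      using tr_comp[OF _ _ i] c c' C_HS by blast
    then have "T c i (T c' i y) = y" using e tr_zv[OF i] by simp
    then show "inv (T c i) y = T c' i y" using permutes_inv_eq[OF tr_perm] by blast
  qed
  then show ?thesis unfolding iso_inv_def Tm_def by (auto simp: restrict_def fun_eq_iff)
qed

lemma topo: "topolinear QQ (Suc N) C"
  unfolding topolinear_def
proof (intro exI[of _ "Tm q m N lam ` C"] conjI ballI)
  show "Tm q m N lam ` C \<subseteq> isotopisms QQ (Suc N)" using Tm_iso by auto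
  show "iso_id (Suc N) \<in> Tm q m N lam ` C" using image_eqI[of "iso_id (Suc N)" "Tm q m N lam" zv C] Tm_zv zv_C by simp
  fix t assume "t \<in> Tm q m N lam ` C"
  then obtain c where c: "c \<in> C" and t: "t = Tm q m N lam c" by auto
  show "iso_apply (Suc N) t ` C = C" using act_surj[OF c] by (simp add: t Tm_apply)
  obtain c' where "c' \<in> C" "ac c c' = zv" using inv_ex[OF c] by blast
  then show "iso_inv (Suc N) t \<in> Tm q m N lam ` C" using Tm_inv[OF c] t by auto
next
  fix a b assume "a \<in> Tm q m N lam ` C" "b \<in> Tm q m N lam ` C"
  then obtain c d where cd: "c \<in> C" "d \<in> C" and ab: "a = Tm q m N lam c" "b = Tm q m N lam d" by auto
  have "ac c d \<in> C" using act_mem cd by blast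
  moreover have "iso_comp (Suc N) a b = Tm q m N lam (ac c d)"
    unfolding ab by (rule Tm_comp) (use cd C_HS in blast)+
  ultimately show "iso_comp (Suc N) a b \<in> Tm q m N lam ` C" by blast
next
  have "inj_on (Tm q m N lam) C"
  proof
    fix c d assume cd: "c \<in> C" "d \<in> C" and e: "Tm q m N lam c = Tm q m N lam d"
    have "ac c zv = ac d zv" using Tm_apply[of c zv] Tm_apply[of d zv] e by simp
    moreover have "c \<in> HS" "d \<in> HS" using cd C_HS by blast+
    ultimately show "c = d" using act_zv by simp
  qed
  then show "card (Tm q m N lam ` C) = card C" by (simp add: card_image)
next
  fix x y assume x: "x \<in> C" and y: "y \<in> C"
  obtain x' where x': "x' \<in> C" "ac x x' = zv" using inv_ex[OF x] by blast
  have hs: "x \<in> HS" "y \<in> HS" "x' \<in> HS" using x y x' C_HS by auto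
  have "\<And>i w. i < Suc N \<Longrightarrow> T x' i (T x i w) = w"
  proof -
    fix i w assume i: "i < Suc N"
    have "inv (T x i) = iso_inv (Suc N) (Tm q m N lam x) i" using i by (simp add: iso_inv_at Tm_at)
    also have "\<dots> = T x' i" using Tm_inv[OF x x'] i by (simp add: Tm_at)
    finally have "inv (T x i) = T x' i" .
    then show "T x' i (T x i w) = w" using permutes_inverses(2)[OF tr_perm, of x i w] by simp
  qed
  then have "ac x' x = zv"
  proof -
    assume h: "\<And>i w. i < Suc N \<Longrightarrow> T x' i (T x i w) = w"
    have "ac x' x = ac x' (ac x zv)" using act_zv[OF hs(1)] by simp
    also have "\<dots> = zv"
    proof
      fix i show "ac x' (ac x zv) i = zv i"
      proof (cases "i < Suc N")
        case True then show ?thesis by (simp only: act_apply h)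
      next
        case False then show ?thesis by (simp add: act_def zv_def)
      qed
    qed
    finally show ?thesis .
  qed
  show "\<exists>t\<in>Tm q m N lam ` C. iso_apply (Suc N) t x = y"
  proof (intro bexI)
    show "iso_apply (Suc N) (Tm q m N lam (ac y x')) x = y"
      using Tm_apply act_comp[OF hs(2) hs(3) hs(1)] \<open>ac x' x = zv\<close> act_zv[OF hs(2)] by simp
    show "Tm q m N lam (ac y x') \<in> Tm q m N lam ` C" using act_mem y x' by auto
  qed
qed


lemma hs_out: "x \<in> HS \<Longrightarrow> \<not> i < Suc N \<Longrightarrow> x i = undefined"
  unfolding hs_iff by simp

lemma sum_diff_one: assumes "finite I" "k \<in> I" "\<And>i. i \<in> I \<Longrightarrow> i \<noteq> k \<Longrightarrow> f i = g i"
  shows "sum f I - sum g I = f k - (g k :: int)"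
proof -
  have "sum f (I - {k}) = sum g (I - {k})" using assms(3) by (intro sum.cong) auto
  then show ?thesis using sum.remove[OF assms(1,2), of f] sum.remove[OF assms(1,2), of g] by simp
qed

lemma uniq: assumes x: "x \<in> C" and y: "y \<in> C" and k: "k < Suc N" and e: "\<And>i. i \<noteq> k \<Longrightarrow> x i = y i"
  shows "x = y"
proof -
  have xl: "x k < QQ" and yl: "y k < QQ" using x y k C_HS by (auto simp: hs_iff)
  have "int m dvd ((\<Sum>i<Suc N. int (x i mod m)) - (\<Sum>i<Suc N. int (y i mod m)))"
    using x y unfolding code_def by (auto intro: dvd_diff)
  also have "(\<Sum>i<Suc N. int (x i mod m)) - (\<Sum>i<Suc N. int (y i mod m)) = int (x k mod m) - int (y k mod m)"
    by (rule sum_diff_one) (use k e in auto)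
  finally have "int (x k mod m) = int (y k mod m)" by (rule dvd_small_eq) (use m0 in auto)
  then have am: "x k mod m = y k mod m" by simp
  have "Phi N lam (\<lambda>i. int (x i mod m)) = Phi N lam (\<lambda>i. int (y i mod m))"
    by (rule Phi_eq) (metis am e)
  then have "int q dvd ((\<Sum>i<Suc N. int (x i div m)) - (\<Sum>i<Suc N. int (y i div m)))"
    using x y unfolding code_def by (metis (no_types, lifting) diff_diff_eq2 dvd_diff mem_Collect_eq diff_add_cancel)
  also have "(\<Sum>i<Suc N. int (x i div m)) - (\<Sum>i<Suc N. int (y i div m)) = int (x k div m) - int (y k div m)"
    by (rule sum_diff_one) (use k e in auto)
  finally have "int (x k div m) = int (y k div m)" by (rule dvd_small_eq) (use xl yl div_lt in auto)
  then have "x k = y k" using am y_eq by simp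
  then show ?thesis using e by (metis ext)
qed


definition "lastv u = nat ((- (\<Sum>i<N. int (u i mod m))) mod int m) +
    m * nat ((Phi N lam (\<lambda>i. int (u i mod m)) - (\<Sum>i<N. int (u i div m))) mod int q)"
definition "extv u = u(N := lastv u)"

lemma lastv_mod: "int (lastv u mod m) = (- (\<Sum>i<N. int (u i mod m))) mod int m"
proof -
  have "nat ((- (\<Sum>i<N. int (u i mod m))) mod int m) < m" using m0 by (simp add: nat_less_iff)
  then show ?thesis unfolding lastv_def using m0 by (simp add: enc_mod)
qed

lemma lastv_div: "int (lastv u div m) = (Phi N lam (\<lambda>i. int (u i mod m)) - (\<Sum>i<N. int (u i div m))) mod int q"
proof -
  have "nat ((- (\<Sum>i<N. int (u i mod m))) mod int m) < m" using m0 by (simp add: nat_less_iff)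
  then show ?thesis unfolding lastv_def using m0 q0 by simp
qed

lemma lastv_lt: "lastv u < QQ"
  unfolding lastv_def using m0 q0 natmod_lt by (intro enc_lt) (simp_all add: nat_less_iff)

lemma extv_C: assumes u: "u \<in> hamming_space QQ N" shows "extv u \<in> C"
proof -
  have ul: "\<And>i. i < N \<Longrightarrow> u i < QQ" and uo: "\<And>i. i \<ge> N \<Longrightarrow> u i = undefined"
    using u unfolding hamming_space_def PiE_def Pi_def extensional_def by auto
  have hs: "extv u \<in> HS" unfolding hs_iff extv_def using ul uo lastv_lt by auto
  have s1: "(\<Sum>i<Suc N. int (extv u i mod m)) = (\<Sum>i<N. int (u i mod m)) + (- (\<Sum>i<N. int (u i mod m))) mod int m"
    by (simp add: extv_def lastv_mod)
  have d1: "int m dvd (\<Sum>i<Suc N. int (extv u i mod m))"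
    unfolding s1 using dvd_diff_mod[of "int m" "- (\<Sum>i<N. int (u i mod m))"] by (simp add: add.commute)
  have P: "Phi N lam (\<lambda>i. int (extv u i mod m)) = Phi N lam (\<lambda>i. int (u i mod m))"
    by (rule Phi_eq) (simp add: extv_def)
  have s2: "(\<Sum>i<Suc N. int (extv u i div m)) = (\<Sum>i<N. int (u i div m)) + (Phi N lam (\<lambda>i. int (u i mod m)) - (\<Sum>i<N. int (u i div m))) mod int q"
    by (simp add: extv_def lastv_div)
  have d2: "int q dvd ((\<Sum>i<Suc N. int (extv u i div m)) - Phi N lam (\<lambda>i. int (extv u i mod m)))"
  proof -
    define R where "R = Phi N lam (\<lambda>i. int (u i mod m)) - (\<Sum>i<N. int (u i div m))"
    have "(\<Sum>i<Suc N. int (extv u i div m)) - Phi N lam (\<lambda>i. int (extv u i mod m)) = R mod int q - R"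
      unfolding s2 P R_def by simp
    then show ?thesis using dvd_diff_mod[of "int q" R] by simp
  qed
  show ?thesis using hs d1 d2 unfolding code_def by simp
qed

lemma card_C: "card C = QQ ^ N"
proof -
  have "bij_betw (\<lambda>x. restrict x {..<N}) C (hamming_space QQ N)"
  proof (rule bij_betw_imageI)
    show "inj_on (\<lambda>x. restrict x {..<N}) C"
    proof
      fix x y assume x: "x \<in> C" and y: "y \<in> C" and e: "restrict x {..<N} = restrict y {..<N}"
      show "x = y"
      proof (rule uniq[OF x y, of N])
        fix i assume "i \<noteq> N"
        show "x i = y i"
        proof (cases "i < N")
          case True
          have "restrict x {..<N} i = restrict y {..<N} i" using e by simp
          then show ?thesis using True by simp
        next
          case False then have F: "\<not> i < Suc N" using \<open>i \<noteq> N\<close> by simp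
          then show ?thesis using hs_out[OF subsetD[OF C_HS x] F] hs_out[OF subsetD[OF C_HS y] F] by simp
        qed
      qed simp
    qed
    show "(\<lambda>x. restrict x {..<N}) ` C = hamming_space QQ N"
    proof
      show "(\<lambda>x. restrict x {..<N}) ` C \<subseteq> hamming_space QQ N"
      proof
        fix z assume "z \<in> (\<lambda>x. restrict x {..<N}) ` C"
        then obtain x where x: "x \<in> C" and z: "z = restrict x {..<N}" by blast
        have "\<And>i. i < Suc N \<Longrightarrow> x i < QQ" using subsetD[OF C_HS x] by (simp add: hs_iff)
        then show "z \<in> hamming_space QQ N" unfolding z hamming_space_def by auto
      qed
      show "hamming_space QQ N \<subseteq> (\<lambda>x. restrict x {..<N}) ` C"
      proof
        fix u assume u: "u \<in> hamming_space QQ N"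
        have "restrict (extv u) {..<N} = u"
          using u unfolding hamming_space_def PiE_def extensional_def extv_def by (auto simp: fun_eq_iff)
        then show "u \<in> (\<lambda>x. restrict x {..<N}) ` C" using extv_C[OF u] image_eqI[of u "\<lambda>x. restrict x {..<N}" "extv u" C] by simp
      qed
    qed
  qed
  then have "card C = card (hamming_space QQ N)" by (rule bij_betw_same_card)
  also have "\<dots> = QQ ^ N" unfolding hamming_space_def by (simp add: card_PiE)
  finally show ?thesis .
qed

lemma mds: "mds2 QQ (Suc N) C"
  unfolding mds2_def
proof (intro conjI ballI impI)
  show "C \<subseteq> HS" by (rule C_HS)
  show "card C = QQ ^ (Suc N - 1)" using card_C by simp
  fix x y assume x: "x \<in> C" and y: "y \<in> C" and ne: "x \<noteq> y"
  define D where "D = {i \<in> {..<Suc N}. x i \<noteq> y i}"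
  show "2 \<le> hdist (Suc N) x y"
  proof (rule ccontr)
    assume "\<not> 2 \<le> hdist (Suc N) x y"
    then have c: "card D \<le> Suc 0" by (simp add: hdist_def D_def)
    have fD: "finite D" by (simp add: D_def)
    obtain k where k: "k < Suc N" and kD: "\<And>i. i \<in> D \<Longrightarrow> i = k"
    proof (cases "D = {}")
      case True then show ?thesis using that[of 0] by simp
    next
      case False
      then obtain k where "k \<in> D" by auto
      moreover have "\<forall>a\<in>D. \<forall>b\<in>D. a = b" using c fD card_le_Suc0_iff_eq by blast
      ultimately have "\<And>i. i \<in> D \<Longrightarrow> i = k" by blast
      moreover have "k < Suc N" using \<open>k \<in> D\<close> D_def by simp
      ultimately show ?thesis using that by blast
    qed
    have "x = y"
    proof (rule uniq[OF x y k])
      fix i assume "i \<noteq> k"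
      show "x i = y i"
      proof (cases "i < Suc N")
        case True then show ?thesis using kD \<open>i \<noteq> k\<close> D_def by auto
      next
        case False then show ?thesis using hs_out[OF subsetD[OF C_HS x] False] hs_out[OF subsetD[OF C_HS y] False] by simp
      qed
    qed
    then show False using ne by simp
  qed
qed

end

definition pairs :: "nat \<Rightarrow> (nat \<times> nat) set" where "pairs N = (SIGMA j:{..<N}. {..<j})"
definition lams :: "nat \<Rightarrow> nat \<Rightarrow> (nat \<times> nat \<Rightarrow> nat) set" where "lams q N = PiE (pairs N) (\<lambda>_. {..<q::nat})"

lemma Phi_single: assumes "i0 < j0" "j0 < N"
  shows "Phi N lam (\<lambda>i. if i = i0 \<or> i = j0 then 1 else 0) = int (lam (j0, i0))"
proof -
  let ?u = "\<lambda>i. if i = i0 \<or> i = j0 then (1::int) else 0"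
  have "Phi N lam ?u = (\<Sum>j<N. \<Sum>i<j. if j = j0 then (if i = i0 then int (lam (j0,i0)) else 0) else 0)"
    unfolding Phi_def using assms by (intro sum.cong refl) auto
  also have "\<dots> = (\<Sum>j<N. if j = j0 then (\<Sum>i<j. if i = i0 then int (lam (j0,i0)) else 0) else 0)"
    by (intro sum.cong refl) auto
  also have "\<dots> = int (lam (j0,i0))" using assms by simp
  finally show ?thesis .
qed

lemma code_inj: assumes q1: "1 < q" and qm: "q dvd m" and m0: "0 < m"
  and lam: "lam \<in> lams q N" and mu: "mu \<in> lams q N" and e: "code q m N lam = code q m N mu"
  shows "lam = mu"
proof (rule ccontr)
  interpret L: cd q m N lam using assms by unfold_locales auto
  interpret M: cd q m N mu using assms by unfold_locales auto
  assume "lam \<noteq> mu"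
  then obtain p where p: "p \<in> pairs N" and ne: "lam p \<noteq> mu p"
    using PiE_ext[of lam "pairs N" "\<lambda>_. {..<q}" mu] lam mu unfolding lams_def by blast
  obtain j0 i0 where p': "p = (j0, i0)" and ij: "i0 < j0" "j0 < N" using p unfolding pairs_def by auto
  have "q \<le> m" using dvd_imp_le[OF qm m0] .
  then have m1: "1 < m" using q1 by simp
  have "1 * m \<le> q * m" using q1 by (intro mult_le_mono1) simp
  then have qm1: "1 < q * m" using m1 by linarith
  define u where "u = (\<lambda>i. if i < N then (if i = i0 \<or> i = j0 then 1 else 0) else (undefined::nat))"
  have u: "u \<in> hamming_space (q*m) N" unfolding hamming_space_def u_def using qm1 q1 m0
    by (auto simp: PiE_def Pi_def extensional_def)
  have x: "L.extv u \<in> code q m N mu" using L.extv_C[OF u] e by simp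
  have y: "M.extv u \<in> code q m N mu" using M.extv_C[OF u] .
  have "L.extv u = M.extv u"
    by (rule M.uniq[OF x y, of N]) (auto simp: L.extv_def M.extv_def)
  then have "L.extv u N = M.extv u N" by simp
  then have "L.lastv u = M.lastv u" unfolding L.extv_def M.extv_def by simp
  then have "int (L.lastv u div m) = int (M.lastv u div m)" by simp
  then have E: "(Phi N lam (\<lambda>i. int (u i mod m)) - (\<Sum>i<N. int (u i div m))) mod int q
      = (Phi N mu (\<lambda>i. int (u i mod m)) - (\<Sum>i<N. int (u i div m))) mod int q"
    by (simp only: L.lastv_div M.lastv_div)
  have "(\<Sum>i<N. int (u i div m)) = 0" using m1 by (intro sum.neutral) (auto simp: u_def)
  moreover have "\<And>lam. Phi N lam (\<lambda>i. int (u i mod m)) = int (lam (j0, i0))"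
  proof -
    fix lam
    have "Phi N lam (\<lambda>i. int (u i mod m)) = Phi N lam (\<lambda>i. if i = i0 \<or> i = j0 then 1 else 0)"
      unfolding Phi_def using m1 by (intro sum.cong refl) (auto simp: u_def)
    then show "Phi N lam (\<lambda>i. int (u i mod m)) = int (lam (j0, i0))" using Phi_single[OF ij] by simp
  qed
  ultimately have "int (lam (j0,i0)) mod int q = int (mu (j0,i0)) mod int q" using E by simp
  moreover have "lam (j0,i0) < q" "mu (j0,i0) < q" using lam mu p unfolding lams_def p' by auto
  ultimately have "lam (j0,i0) = mu (j0,i0)" by (simp add: zmod_int[symmetric])
  then show False using ne p' by simp
qed


lemma greedy:
  assumes "finite F" and K: "\<And>x. x \<in> F \<Longrightarrow> card {y \<in> F. R x y \<or> R y x \<or> y = x} \<le> K"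
  shows "\<exists>S\<subseteq>F. (\<forall>x\<in>S. \<forall>y\<in>S. x \<noteq> y \<longrightarrow> \<not> R x y) \<and> card F \<le> K * card S"
  using assms
proof (induction "card F" arbitrary: F rule: less_induct)
  case less
  show ?case
  proof (cases "F = {}")
    case True then show ?thesis by auto
  next
    case False
    then obtain x where x: "x \<in> F" by auto
    define D where "D = {y \<in> F. R x y \<or> R y x \<or> y = x}"
    define F' where "F' = F - D"
    have xD: "x \<in> D" using x by (simp add: D_def)
    have fD: "finite D" using less(2) by (simp add: D_def)
    have "F' \<subset> F" using x xD by (auto simp: F'_def)
    then have "card F' < card F" by (rule psubset_card_mono[OF less(2)])
    moreover have "finite F'" using less(2) by (simp add: F'_def)
    moreover have Kz: "\<And>z. z \<in> F' \<Longrightarrow> card {y \<in> F'. R z y \<or> R y z \<or> y = z} \<le> K"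
    proof -
      fix z assume "z \<in> F'"
      then have "card {y \<in> F'. R z y \<or> R y z \<or> y = z} \<le> card {y \<in> F. R z y \<or> R y z \<or> y = z}"
        using less(2) by (intro card_mono) (auto simp: F'_def)
      also have "\<dots> \<le> K" using less(3) \<open>z \<in> F'\<close> by (simp add: F'_def)
      finally show "card {y \<in> F'. R z y \<or> R y z \<or> y = z} \<le> K" .
    qed
    ultimately have "\<exists>S\<subseteq>F'. (\<forall>a\<in>S. \<forall>b\<in>S. a \<noteq> b \<longrightarrow> \<not> R a b) \<and> card F' \<le> K * card S"
      by (intro less(1)) simp_all
    then obtain S' where S': "S' \<subseteq> F'" "\<forall>a\<in>S'. \<forall>b\<in>S'. a \<noteq> b \<longrightarrow> \<not> R a b" "card F' \<le> K * card S'"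
      by blast
    define S where "S = insert x S'"
    have xS': "x \<notin> S'" using S'(1) xD by (auto simp: F'_def)
    have fS': "finite S'" using S'(1) \<open>finite F'\<close> finite_subset by blast
    have "S \<subseteq> F" using S'(1) x by (auto simp: S_def F'_def)
    moreover have "\<forall>a\<in>S. \<forall>b\<in>S. a \<noteq> b \<longrightarrow> \<not> R a b"
    proof (intro ballI impI)
      fix a b assume a: "a \<in> S" and b: "b \<in> S" and ab: "a \<noteq> b"
      have nD: "\<And>z. z \<in> S' \<Longrightarrow> z \<notin> D" using S'(1) by (auto simp: F'_def)
      have inF: "\<And>z. z \<in> S' \<Longrightarrow> z \<in> F" using S'(1) by (auto simp: F'_def)
      show "\<not> R a b"
      proof (cases "a = x")
        case True
        then have "b \<in> S'" using b ab by (simp add: S_def)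
        then show ?thesis using nD[of b] inF[of b] True by (simp add: D_def)
      next
        case False
        then have a': "a \<in> S'" using a by (simp add: S_def)
        show ?thesis
        proof (cases "b = x")
          case True then show ?thesis using nD[OF a'] inF[OF a'] by (simp add: D_def)
        next
          case False then have "b \<in> S'" using b by (simp add: S_def)
          then show ?thesis using S'(2) a' ab by blast
        qed
      qed
    qed
    moreover have "card F \<le> K * card S"
    proof -
      have "D \<subseteq> F" by (auto simp: D_def)
      then have "card F' = card F - card D" "card D \<le> card F"
        unfolding F'_def using less(2) fD by (simp_all add: card_Diff_subset card_mono)
      then have "card F = card F' + card D" by linarith
      also have "\<dots> \<le> K * card S' + K" using S'(3) less(3)[OF x] by (simp add: D_def)
      also have "\<dots> = K * card S" using xS' fS' by (simp add: S_def)
      finally show ?thesis .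
    qed
    ultimately show ?thesis by blast
  qed
qed


lemma card_pairs: "card (pairs N) = N choose 2"
proof (induction N)
  case 0 then show ?case by (simp add: pairs_def)
next
  case (Suc N)
  have "card (pairs (Suc N)) = (\<Sum>j<Suc N. card {..<j})" unfolding pairs_def by (simp add: card_SigmaI)
  also have "\<dots> = (\<Sum>j<N. card {..<j}) + N" by simp
  also have "(\<Sum>j<N. card {..<j}) = card (pairs N)" unfolding pairs_def by (simp add: card_SigmaI)
  also have "card (pairs N) + N = Suc N choose 2"
  proof -
    have "Suc N choose 2 = N + (N choose 2)" using binomial_Suc_Suc[of N 1] by (simp add: numeral_2_eq_2)
    then show ?thesis using Suc by simp
  qed
  finally show ?case .
qed

lemma finite_pairs: "finite (pairs N)" unfolding pairs_def by (intro finite_SigmaI) auto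

lemma card_lams: "card (lams q N) = q ^ (N choose 2)"
  unfolding lams_def by (simp add: card_PiE finite_pairs card_pairs)

lemma finite_lams: "finite (lams q N)"
  unfolding lams_def by (simp add: finite_PiE finite_pairs)

lemma card_isos: "card (isotopisms Q n) = fact Q ^ n"
  unfolding isotopisms_def by (simp add: card_PiE card_permutations)

lemma finite_isos: "finite (isotopisms Q n)"
  unfolding isotopisms_def by (intro finite_PiE) (auto simp: finite_permutations)

lemma g_inj: assumes s: "\<sigma> permutes {..<n}" and t: "\<tau> \<in> isotopisms Q n"
  shows "inj_on (\<lambda>x. iso_apply n \<tau> (perm_apply n \<sigma> x)) (hamming_space Q n)"
proof
  fix x y assume x: "x \<in> hamming_space Q n" and y: "y \<in> hamming_space Q n"
    and e: "iso_apply n \<tau> (perm_apply n \<sigma> x) = iso_apply n \<tau> (perm_apply n \<sigma> y)"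
  have "\<And>i. i < n \<Longrightarrow> x (\<sigma> i) = y (\<sigma> i)"
  proof -
    fix i assume i: "i < n"
    have "iso_apply n \<tau> (perm_apply n \<sigma> x) i = iso_apply n \<tau> (perm_apply n \<sigma> y) i" using e by simp
    then have "\<tau> i (x (\<sigma> i)) = \<tau> i (y (\<sigma> i))" using i by (simp add: iso_apply_def perm_apply_def)
    moreover have "\<tau> i permutes {..<Q}" using t i by (auto simp: isotopisms_def)
    ultimately show "x (\<sigma> i) = y (\<sigma> i)" by (metis permutes_inj injD)
  qed
  then have "\<And>j. j < n \<Longrightarrow> x j = y j"
    by (metis s lessThan_iff permutes_in_image permutes_inverses(1))
  then show "x = y" using x y unfolding hamming_space_def by (intro PiE_ext[OF x[unfolded hamming_space_def] y[unfolded hamming_space_def]]) auto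
qed

lemma nbhd_card: assumes M: "M \<subseteq> hamming_space Q n" and F: "F \<subseteq> Pow (hamming_space Q n)"
  shows "card {M' \<in> F. equivalent Q n M M' \<or> equivalent Q n M' M \<or> M' = M} \<le> 2 * (fact n * fact Q ^ n) + 1"
proof -
  define HS where "HS = hamming_space Q n"
  define PI where "PI = {\<sigma>. \<sigma> permutes {..<n}} \<times> isotopisms Q n"
  define g where "g = (\<lambda>(\<sigma>,\<tau>) x. iso_apply n \<tau> (perm_apply n \<sigma> x))"
  define A where "A = (\<lambda>st. g st ` M) ` PI"
  define B where "B = (\<lambda>st. {x \<in> HS. g st x \<in> M}) ` PI"
  have fPI: "finite PI" unfolding PI_def by (simp add: finite_permutations finite_isos)
  have cPI: "card PI = fact n * fact Q ^ n" unfolding PI_def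
    by (simp add: card_cartesian_product card_permutations card_isos)
  have sub: "{M' \<in> F. equivalent Q n M M' \<or> equivalent Q n M' M \<or> M' = M} \<subseteq> A \<union> B \<union> {M}"
  proof
    fix M' assume "M' \<in> {M' \<in> F. equivalent Q n M M' \<or> equivalent Q n M' M \<or> M' = M}"
    then have M'F: "M' \<in> F" and c: "equivalent Q n M M' \<or> equivalent Q n M' M \<or> M' = M" by auto
    have M'H: "M' \<subseteq> HS" using M'F F by (auto simp: HS_def)
    consider "equivalent Q n M M'" | "equivalent Q n M' M" | "M' = M" using c by blast
    then show "M' \<in> A \<union> B \<union> {M}"
    proof cases
      case 1
      then obtain \<sigma> \<tau> where st: "(\<sigma>,\<tau>) \<in> PI" and "M' = (\<lambda>x. iso_apply n \<tau> (perm_apply n \<sigma> x)) ` M"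
        unfolding equivalent_def PI_def by blast
      then have "M' = g (\<sigma>,\<tau>) ` M" by (simp add: g_def)
      then show ?thesis using st unfolding A_def by blast
    next
      case 2
      then obtain \<sigma> \<tau> where s: "\<sigma> permutes {..<n}" and t: "\<tau> \<in> isotopisms Q n"
        and e: "M = (\<lambda>x. iso_apply n \<tau> (perm_apply n \<sigma> x)) ` M'"
        unfolding equivalent_def by blast
      have inj: "inj_on (g (\<sigma>,\<tau>)) HS" using g_inj[OF s t] by (simp add: g_def HS_def)
      have e': "M = g (\<sigma>,\<tau>) ` M'" using e by (simp add: g_def)
      have "M' = {x \<in> HS. g (\<sigma>,\<tau>) x \<in> M}"
      proof
        show "M' \<subseteq> {x \<in> HS. g (\<sigma>,\<tau>) x \<in> M}" using M'H e' by auto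
        show "{x \<in> HS. g (\<sigma>,\<tau>) x \<in> M} \<subseteq> M'"
        proof
          fix x assume "x \<in> {x \<in> HS. g (\<sigma>,\<tau>) x \<in> M}"
          then have xH: "x \<in> HS" and "g (\<sigma>,\<tau>) x \<in> g (\<sigma>,\<tau>) ` M'" using e' by auto
          then obtain y where y: "y \<in> M'" "g (\<sigma>,\<tau>) x = g (\<sigma>,\<tau>) y" by auto
          then have "x = y" using inj xH M'H by (meson inj_onD subsetD)
          then show "x \<in> M'" using y by simp
        qed
      qed
      moreover have "(\<sigma>,\<tau>) \<in> PI" using s t by (simp add: PI_def)
      ultimately show ?thesis unfolding B_def by blast
    qed simp
  qed
  have "card {M' \<in> F. equivalent Q n M M' \<or> equivalent Q n M' M \<or> M' = M} \<le> card (A \<union> B \<union> {M})"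
    using fPI by (intro card_mono[OF _ sub]) (simp add: A_def B_def)
  also have "\<dots> \<le> card A + card B + card {M}"
    by (meson card_Un_le le_trans add_le_mono1)
  also have "\<dots> \<le> card PI + card PI + 1"
    unfolding A_def B_def by (intro add_mono card_image_le fPI) simp
  finally show ?thesis using cPI by simp
qed


lemma main_count:
  fixes q N s :: nat
  assumes q1: "1 < q" and N: "1 \<le> N" and s: "1 \<le> s"
  defines "m \<equiv> q * s" and "QQ \<equiv> q * (q * s)"
  shows "\<exists>S. (\<forall>M\<in>S. mds2 QQ (Suc N) M \<and> topolinear QQ (Suc N) M) \<and>
       (\<forall>M\<in>S. \<forall>M'\<in>S. M \<noteq> M' \<longrightarrow> \<not> equivalent QQ (Suc N) M M') \<and>
       q ^ (N choose 2) \<le> (2 * (fact (Suc N) * fact QQ ^ Suc N) + 1) * card S"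
proof -
  have qm: "q dvd m" and m0: "0 < m" using q1 s by (auto simp: m_def)
  interpret dummy: cd q m N "\<lambda>_. 0" using q1 qm m0 by unfold_locales auto
  have QQm: "QQ = q * m" by (simp add: QQ_def m_def)
  define F where "F = (\<lambda>lam. code q m N lam) ` lams q N"
  have injF: "inj_on (\<lambda>lam. code q m N lam) (lams q N)"
    using code_inj[OF q1 qm m0] by (intro inj_onI) blast
  have cF: "card F = q ^ (N choose 2)" unfolding F_def using card_image[OF injF] card_lams by simp
  have fF: "finite F" unfolding F_def by (simp add: finite_lams)
  have good: "\<And>M. M \<in> F \<Longrightarrow> mds2 QQ (Suc N) M \<and> topolinear QQ (Suc N) M \<and> M \<subseteq> hamming_space QQ (Suc N)"
  proof -
    fix M assume "M \<in> F"
    then obtain lam where M: "M = code q m N lam" unfolding F_def by blast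
    interpret cd q m N lam using q1 qm m0 by unfold_locales auto
    show "mds2 QQ (Suc N) M \<and> topolinear QQ (Suc N) M \<and> M \<subseteq> hamming_space QQ (Suc N)"
      using mds topo C_HS unfolding M QQm by simp
  qed
  have FP: "F \<subseteq> Pow (hamming_space QQ (Suc N))" using good by auto
  have "\<exists>S\<subseteq>F. (\<forall>x\<in>S. \<forall>y\<in>S. x \<noteq> y \<longrightarrow> \<not> equivalent QQ (Suc N) x y) \<and>
      card F \<le> (2 * (fact (Suc N) * fact QQ ^ Suc N) + 1) * card S"
  proof (rule greedy[OF fF])
    fix x assume "x \<in> F"
    then have xH: "x \<subseteq> hamming_space QQ (Suc N)" using good by blast
    have "{y \<in> F. equivalent QQ (Suc N) x y \<or> equivalent QQ (Suc N) y x \<or> y = x}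
        = {M' \<in> F. equivalent QQ (Suc N) x M' \<or> equivalent QQ (Suc N) M' x \<or> M' = x}" by simp
    then show "card {y \<in> F. equivalent QQ (Suc N) x y \<or> equivalent QQ (Suc N) y x \<or> y = x}
        \<le> 2 * (fact (Suc N) * fact QQ ^ Suc N) + 1"
      using nbhd_card[OF xH FP] by simp
  qed
  then obtain S where "S \<subseteq> F" "\<forall>x\<in>S. \<forall>y\<in>S. x \<noteq> y \<longrightarrow> \<not> equivalent QQ (Suc N) x y"
      "card F \<le> (2 * (fact (Suc N) * fact QQ ^ Suc N) + 1) * card S" by blast
  then show ?thesis using good cF by (intro exI[of _ S]) auto
qed


lemma f_lim: "(L::real) > 0 \<Longrightarrow> ((\<lambda>n::nat. -(L*(real n - 1) + ln 3 + real n * ln (real n) + real n * c) / (L * (real n * (real n - 1)/2))) \<longlongrightarrow> 0) at_top"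
  by real_asymp

lemma choose2_real: "real (n choose 2) = real n * (real n - 1) / 2"
proof (induction n)
  case 0 then show ?case by simp
next
  case (Suc n)
  have "Suc n choose 2 = n + (n choose 2)" using binomial_Suc_Suc[of n 1] by (simp add: numeral_2_eq_2)
  then show ?case using Suc by (simp add: field_simps)
qed

theorem corollary3:
  fixes p k s :: nat
  assumes "prime p" and "k \<ge> 1" and "s \<ge> 1"
  shows "\<exists>f :: nat \<Rightarrow> real. f \<longlonglongrightarrow> 0 \<and>
    (\<forall>\<^sub>F n in sequentially. \<exists>S.
       (\<forall>M\<in>S. mds2 ((p ^ k)\<^sup>2 * s) n M \<and> topolinear ((p ^ k)\<^sup>2 * s) n M) \<and>
       (\<forall>M\<in>S. \<forall>M'\<in>S. M \<noteq> M' \<longrightarrow> \<not> equivalent ((p ^ k)\<^sup>2 * s) n M M') \<and>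
       real (card S) \<ge> real (p ^ k) powr (real (n choose 2) * (1 + f n)))"
proof -
  define q where "q = p ^ k"
  have p2: "2 \<le> p" using assms(1) prime_ge_2_nat by blast
  have "p ^ 1 \<le> p ^ k" using assms(2) p2 by (intro power_increasing) auto
  then have q1: "1 < q" using p2 by (simp add: q_def)
  define QQ where "QQ = q * (q * s)"
  have QQe: "(p ^ k)\<^sup>2 * s = QQ" by (simp add: QQ_def q_def power2_eq_square)
  define L where "L = ln (real q)"
  have L0: "0 < L" using q1 by (simp add: L_def)
  define c where "c = ln (fact QQ :: real)"
  define f where "f = (\<lambda>n::nat. -(L*(real n - 1) + ln 3 + real n * ln (real n) + real n * c) / (L * (real n * (real n - 1)/2)))"
  have lim: "f \<longlonglongrightarrow> 0" unfolding f_def by (rule f_lim[OF L0])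
  have ev: "\<forall>\<^sub>F n in sequentially. \<exists>S.
       (\<forall>M\<in>S. mds2 QQ n M \<and> topolinear QQ n M) \<and>
       (\<forall>M\<in>S. \<forall>M'\<in>S. M \<noteq> M' \<longrightarrow> \<not> equivalent QQ n M M') \<and>
       real (card S) \<ge> real q powr (real (n choose 2) * (1 + f n))"
    using eventually_ge_at_top[of 2]
  proof eventually_elim
    case (elim n)
    define N where "N = n - 1"
    have n: "n = Suc N" and N: "1 \<le> N" using elim by (simp_all add: N_def)
    obtain S where S1: "\<forall>M\<in>S. mds2 QQ (Suc N) M \<and> topolinear QQ (Suc N) M"
      and S2: "\<forall>M\<in>S. \<forall>M'\<in>S. M \<noteq> M' \<longrightarrow> \<not> equivalent QQ (Suc N) M M'"
      and S3: "q ^ (N choose 2) \<le> (2 * (fact (Suc N) * fact QQ ^ Suc N) + 1) * card S"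
      using main_count[OF q1 N assms(3)] unfolding QQ_def by blast
    define D where "D = 3 * real n ^ n * (fact QQ) ^ n"
    have fQ: "(1::real) \<le> fact QQ" by simp
    have Dpos: "0 < D" unfolding D_def using elim by simp
    have KD: "real (2 * (fact (Suc N) * fact QQ ^ Suc N) + 1) \<le> D"
    proof -
      have a: "(fact n :: real) \<le> real n ^ n" using fact_le_power[of n] by simp
      have b: "(1::real) \<le> fact QQ ^ n" using fQ by simp
      have c1: "(1::real) \<le> fact n" by simp
      have "real (2 * (fact (Suc N) * fact QQ ^ Suc N) + 1) = 2 * (fact n * fact QQ ^ n) + 1"
        unfolding n by (simp add: of_nat_fact del: fact_Suc)
      also have "\<dots> \<le> 3 * (fact n * fact QQ ^ n)"
      proof -
        have "1 * 1 \<le> (fact n :: real) * fact QQ ^ n" using mult_mono[OF c1 b] by simp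
        then show ?thesis by simp
      qed
      also have "\<dots> \<le> D" unfolding D_def using a b by (simp add: mult_right_mono)
      finally show ?thesis .
    qed
    have cS: "real q ^ (N choose 2) / D \<le> real (card S)"
    proof -
      have "real q ^ (N choose 2) \<le> real (2 * (fact (Suc N) * fact QQ ^ Suc N) + 1) * real (card S)"
      proof -
        have "real (q ^ (N choose 2)) \<le> real ((2 * (fact (Suc N) * fact QQ ^ Suc N) + 1) * card S)"
          using S3 by (simp only: of_nat_le_iff)
        then show ?thesis by (simp only: of_nat_mult of_nat_power)
      qed
      also have "\<dots> \<le> D * real (card S)" using KD by (simp add: mult_right_mono)
      finally show ?thesis using Dpos by (simp add: divide_le_eq mult.commute)
    qed
    have lnD: "ln D = ln 3 + real n * ln (real n) + real n * c"
      unfolding D_def c_def using elim by (simp add: ln_mult ln_realpow)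
    have Cn: "real (n choose 2) = real (N choose 2) + real N"
      using choose2_real[of n] choose2_real[of N] n by (simp add: field_simps)
    have Cpos: "real n * (real n - 1) / 2 > 0" using elim by simp
    define X where "X = L*(real n - 1) + ln 3 + real n * ln (real n) + real n * c"
    define Cr where "Cr = real n * (real n - 1) / 2"
    have fn: "f n = - X / (L * Cr)" by (simp add: f_def X_def Cr_def)
    have Cr0: "Cr \<noteq> 0" using Cpos unfolding Cr_def by linarith
    have "real (n choose 2) * (1 + f n) = Cr * (1 + - X / (L * Cr))" by (simp add: fn choose2_real Cr_def)
    also have "\<dots> = Cr - X / L" using L0 Cr0 by (simp add: field_simps)
    finally have "real (n choose 2) * (1 + f n) = real (n choose 2) - (L*(real n - 1) + ln 3 + real n * ln (real n) + real n * c) / L"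
      by (simp add: X_def Cr_def choose2_real)
    also have "\<dots> = real (N choose 2) - ln D / L"
      using Cn L0 lnD n by (simp add: field_simps)
    finally have ex: "real (n choose 2) * (1 + f n) = real (N choose 2) - ln D / L" .
    have "real q powr (real (n choose 2) * (1 + f n)) = real q powr real (N choose 2) / real q powr (ln D / L)"
      unfolding ex by (simp add: powr_diff)
    also have "real q powr (ln D / L) = D"
      using q1 L0 Dpos by (simp add: powr_def L_def)
    also have "real q powr real (N choose 2) = real q ^ (N choose 2)"
      using q1 by (simp add: powr_realpow)
    finally have "real q powr (real (n choose 2) * (1 + f n)) = real q ^ (N choose 2) / D" .
    then show ?case using S1 S2 cS n by (intro exI[of _ S]) simp
  qed
  show ?thesis using lim ev unfolding QQe q_def by blast
qed

end
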